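(* Let $m\ge1$, $R=\mathbb C[y_1,\dots,y_m]/(y_1^2,\dots,y_m^2)$ and $\omega=y_1+\dots+y_m$. The elements $$\rho_{j,T}:=\frac1{j!}\,\omega^jV_T(y_1,\dots,y_m),\qquad T\in\mathbf T_{m,l},\ 0\le l\le\lfloor m/2\rfloor,\ 0\le j\le m-2l,$$ form a basis of $R$, and for each $l$ those with $T\in\mathbf T_{m,l}$ form a basis of the isotypic component $R_l=\bigoplus_{j=0}^{m-2l}\omega^j\operatorname{span}\{V_T:T\in\mathbf T_{m,l}\}$.
   Context: $\mathbf T_{m,l}$ is the set of standard Young tableaux of shape $(2^l,1^{m-2l})$ ($l$ rows of length 2, then $m-2l$ rows of length 1) filled with $1,\dots,m$; row $i\le l$ contains $a_{i,1}<a_{i,2}$. For $T\in\mathbf T_{m,l}$, $V_T(y_1,\dots,y_m):=\prod_{i=1}^l(y_{a_{i,1}}-y_{a_{i,2}})$. *)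

theory Defs
  imports Complex_Main
begin

text \<open>Concrete model of R = C[y_1..y_m]/(y_1^2,...,y_m^2): an element is the coefficient
function on squarefree monomials y_S (S a subset of {1..m}); y_S * y_T = y_(S union T)
if S, T disjoint and 0 otherwise.\<close>

definition Rm :: "nat \<Rightarrow> (nat set \<Rightarrow> complex) set" where
  "Rm m = {f. \<forall>S. f S \<noteq> 0 \<longrightarrow> S \<subseteq> {1..m}}"

definition rmul :: "(nat set \<Rightarrow> complex) \<Rightarrow> (nat set \<Rightarrow> complex) \<Rightarrow> (nat set \<Rightarrow> complex)" where
  "rmul f g = (\<lambda>S. \<Sum>A\<in>Pow S. f A * g (S - A))"

definition rone :: "nat set \<Rightarrow> complex" where
  "rone = (\<lambda>S. if S = {} then 1 else 0)"

definition yv :: "nat \<Rightarrow> nat set \<Rightarrow> complex" where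
  "yv i = (\<lambda>S. if S = {i} then 1 else 0)"

definition rpow :: "(nat set \<Rightarrow> complex) \<Rightarrow> nat \<Rightarrow> (nat set \<Rightarrow> complex)" where
  "rpow f j = (rmul f ^^ j) rone"

definition omega :: "nat \<Rightarrow> nat set \<Rightarrow> complex" where
  "omega m = (\<lambda>S. \<Sum>i=1..m. yv i S)"

text \<open>Standard Young tableaux of shape (2^l,1^(m-2l)) filled with 1..m, as lists of rows.\<close>
definition tabl :: "nat \<Rightarrow> nat \<Rightarrow> nat list list set" where
  "tabl m l = {T. length T = m - l
     \<and> (\<forall>i<length T. length (T!i) = (if i < l then 2 else 1))
     \<and> distinct (concat T) \<and> set (concat T) = {1..m}
     \<and> (\<forall>i<l. T!i!0 < T!i!1)
     \<and> (\<forall>i k. Suc i < length T \<and> k < length (T!(Suc i)) \<longrightarrow> T!i!k < T!(Suc i)!k)}"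

definition VT :: "nat \<Rightarrow> nat list list \<Rightarrow> nat set \<Rightarrow> complex" where
  "VT l T = foldr (\<lambda>i acc. rmul (\<lambda>S. yv (T!i!0) S - yv (T!i!1) S) acc) [0..<l] rone"

definition rho :: "nat \<Rightarrow> nat \<times> nat \<times> nat list list \<Rightarrow> nat set \<Rightarrow> complex" where
  "rho m = (\<lambda>(l, j, T). (\<lambda>S. (1 / fact j) * rmul (rpow (omega m) j) (VT l T) S))"

definition lincomb :: "('i \<Rightarrow> complex) \<Rightarrow> 'i set \<Rightarrow> ('i \<Rightarrow> nat set \<Rightarrow> complex) \<Rightarrow> nat set \<Rightarrow> complex" where
  "lincomb c I v = (\<lambda>S. \<Sum>k\<in>I. c k * v k S)"

definition cspan :: "'i set \<Rightarrow> ('i \<Rightarrow> nat set \<Rightarrow> complex) \<Rightarrow> (nat set \<Rightarrow> complex) set" where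
  "cspan I v = {lincomb c I v | c. True}"

definition lin_indep :: "'i set \<Rightarrow> ('i \<Rightarrow> nat set \<Rightarrow> complex) \<Rightarrow> bool" where
  "lin_indep I v \<longleftrightarrow> finite I \<and> (\<forall>c. lincomb c I v = (\<lambda>S. 0) \<longrightarrow> (\<forall>k\<in>I. c k = 0))"

definition is_basis_of :: "'i set \<Rightarrow> ('i \<Rightarrow> nat set \<Rightarrow> complex) \<Rightarrow> (nat set \<Rightarrow> complex) set \<Rightarrow> bool" where
  "is_basis_of I v W \<longleftrightarrow> v ` I \<subseteq> W \<and> lin_indep I v \<and> cspan I v = W"

definition idx :: "nat \<Rightarrow> (nat \<times> nat \<times> nat list list) set" where
  "idx m = {(l, j, T). l \<le> m div 2 \<and> j \<le> m - 2*l \<and> T \<in> tabl m l}"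

definition idx_l :: "nat \<Rightarrow> nat \<Rightarrow> (nat \<times> nat \<times> nat list list) set" where
  "idx_l m l = {(l', j, T). l' = l \<and> j \<le> m - 2*l \<and> T \<in> tabl m l}"

definition Rl :: "nat \<Rightarrow> nat \<Rightarrow> (nat set \<Rightarrow> complex) set" where
  "Rl m l = cspan {(j, T). j \<le> m - 2*l \<and> T \<in> tabl m l}
              (\<lambda>(j, T). rmul (rpow (omega m) j) (VT l T))"

end

theory Submission
  imports Defs "HOL-Library.Function_Algebras"
begin

lemma fsum_apply: "(\<Sum>w\<in>A. F w) S = (\<Sum>w\<in>A. F w S)"
  by (induct A rule: infinite_finite_induct) auto

lemma rmul_infinite: "infinite S \<Longrightarrow> rmul f g S = 0"
  by (simp add: rmul_def)

lemma rmul_yv: "finite S \<Longrightarrow> rmul (yv a) G S = (if a \<in> S then G (S - {a}) else 0)"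
proof -
  assume fS: "finite S"
  have "rmul (yv a) G S = (\<Sum>A\<in>Pow S. if A = {a} then G (S - A) else 0)"
    unfolding rmul_def yv_def by (rule sum.cong) auto
  also have "\<dots> = (if a \<in> S then G (S - {a}) else 0)"
    using fS by (subst sum.delta) auto
  finally show ?thesis .
qed

lemma rmul_diff_left: "rmul (\<lambda>S. f S - g S) h = (\<lambda>S. rmul f h S - rmul g h S)"
  by (simp add: rmul_def fun_eq_iff left_diff_distrib sum_subtractf)

lemma rmul_scale_right: "rmul f (\<lambda>S. c * g S) = (\<lambda>S. c * rmul f g S)"
  by (simp add: rmul_def fun_eq_iff sum_distrib_left algebra_simps)

lemma rmul_omega: "finite S \<Longrightarrow> rmul (omega m) f S = (\<Sum>x\<in>S\<inter>{1..m}. f (S - {x}))"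
proof -
  assume fS: "finite S"
  have "rmul (omega m) f S = (\<Sum>i=1..m. rmul (yv i) f S)"
    unfolding rmul_def omega_def by (simp add: sum_distrib_right) (rule sum.swap)
  also have "\<dots> = (\<Sum>i\<in>{1..m}. if i \<in> S then f (S - {i}) else 0)"
    using fS by (simp add: rmul_yv)
  also have "\<dots> = (\<Sum>i\<in>{1..m} \<inter> S. f (S - {i}))"
    by (simp add: sum.inter_restrict)
  finally show ?thesis by (simp add: Int_commute)
qed

lemma rmul_assoc: "rmul (rmul f g) h = rmul f (rmul g h)"
proof
  fix S
  show "rmul (rmul f g) h S = rmul f (rmul g h) S"
  proof (cases "finite S")
    case False thus ?thesis by (simp add: rmul_def)
  next
    case True
    have "rmul (rmul f g) h S = (\<Sum>A\<in>Pow S. \<Sum>B\<in>Pow A. f B * g (A - B) * h (S - A))"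
      by (simp add: rmul_def sum_distrib_right)
    also have "\<dots> = (\<Sum>(A,B)\<in>Sigma (Pow S) Pow. f B * g (A - B) * h (S - A))"
      by (rule sum.Sigma) (auto intro: finite_subset True)
    also have "\<dots> = (\<Sum>(B,C)\<in>Sigma (Pow S) (\<lambda>B. Pow (S - B)). f B * g C * h (S - B - C))"
    proof (rule sum.reindex_bij_witness[where i="\<lambda>(B,C). (B \<union> C, B)" and j="\<lambda>(A,B). (B, A - B)"])
      fix a assume "a \<in> Sigma (Pow S) Pow"
      then obtain A B where a: "a = (A,B)" "B \<subseteq> A" "A \<subseteq> S" by auto
      have "S - B - (A - B) = S - A" using a by auto
      then show "(case case a of (A, B) \<Rightarrow> (B, A - B) of (B, C) \<Rightarrow> f B * g C * h (S - B - C)) =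
         (case a of (A, B) \<Rightarrow> f B * g (A - B) * h (S - A))" using a by simp
    qed auto
    also have "\<dots> = (\<Sum>B\<in>Pow S. \<Sum>C\<in>Pow (S - B). f B * g C * h (S - B - C))"
      by (rule sum.Sigma[symmetric]) (auto intro: finite_subset True)
    also have "\<dots> = rmul f (rmul g h) S" by (simp add: rmul_def sum_distrib_left mult.assoc)
    finally show ?thesis .
  qed
qed

lemma rmul_rone: "(\<And>S. infinite S \<Longrightarrow> f S = 0) \<Longrightarrow> rmul rone f = f"
proof
  fix S assume h: "\<And>S. infinite S \<Longrightarrow> f S = 0"
  show "rmul rone f S = f S"
  proof (cases "finite S")
    case False thus ?thesis using h by (simp add: rmul_def)
  next
    case True
    have "rmul rone f S = (\<Sum>A\<in>Pow S. if A = {} then f (S - A) else 0)"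
      unfolding rmul_def rone_def by (rule sum.cong) auto
    also have "\<dots> = f S" using True by (subst sum.delta) auto
    finally show ?thesis .
  qed
qed

lemma rpow_Suc: "rpow f (Suc j) = rmul f (rpow f j)"
  by (simp add: rpow_def)

definition Fop :: "nat \<Rightarrow> (nat set \<Rightarrow> complex) \<Rightarrow> nat set \<Rightarrow> complex" where
  "Fop m f S = (\<Sum>x\<in>{1..m} - S. f (insert x S))"

lemma Fop_lincomb: "Fop m (\<lambda>S. \<Sum>k\<in>I. c k * v k S) = (\<lambda>S. \<Sum>k\<in>I. c k * Fop m (v k) S)"
  apply (simp add: Fop_def fun_eq_iff sum_distrib_left)
  apply (rule allI)
  apply (rule sum.swap)
  done

lemma Fpow_lincomb: "(Fop m ^^ r) (\<lambda>S. \<Sum>k\<in>I. c k * v k S) = (\<lambda>S. \<Sum>k\<in>I. c k * (Fop m ^^ r) (v k) S)"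
  by (induct r) (simp_all add: Fop_lincomb)

lemma Fop_scale: "Fop m (\<lambda>S. c * f S) = (\<lambda>S. c * Fop m f S)"
  by (simp add: Fop_def fun_eq_iff sum_distrib_left)

lemma Fop_zero: "Fop m (\<lambda>S. 0) = (\<lambda>S. 0)"
  by (simp add: Fop_def fun_eq_iff)

lemma Fpow_zero: "(Fop m ^^ r) (\<lambda>S. 0) = (\<lambda>S. 0)"
  by (induct r) (simp_all add: Fop_zero)

lemma lin_indep_inj:
  assumes li: "lin_indep I v" shows "inj_on v I"
proof (rule inj_onI, rule ccontr)
  fix k k' assume k: "k \<in> I" "k' \<in> I" "v k = v k'" "k \<noteq> k'"
  define c where "c = (\<lambda>x. if x = k then (1::complex) else if x = k' then -1 else 0)"
  have fin: "finite I" using li by (simp add: lin_indep_def)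
  have "lincomb c I v = (\<lambda>S. 0)"
  proof
    fix S
    have "(\<Sum>x\<in>I. c x * v x S) = (\<Sum>x\<in>I. (if x = k then v k S else 0) - (if x = k' then v k' S else 0))"
      by (rule sum.cong) (use k(4) in \<open>auto simp: c_def\<close>)
    also have "\<dots> = 0" using fin k by (simp add: sum_subtractf sum.delta)
    finally show "lincomb c I v S = 0" by (simp add: lincomb_def)
  qed
  then have "c k = 0" using li k by (auto simp: lin_indep_def)
  then show False by (simp add: c_def)
qed

lemma lin_indep_span:
  assumes li: "lin_indep I v" and sub: "v ` I \<subseteq> Rm m" and card: "2^m \<le> card I"
  shows "Rm m \<subseteq> cspan I v"
proof
  fix x assume x: "x \<in> Rm m"
  interpret fvs: vector_space "\<lambda>c (f::nat set \<Rightarrow> complex). (\<lambda>S. c * f S)"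
    by unfold_locales (simp_all add: fun_eq_iff algebra_simps)
  have fin: "finite I" using li by (simp add: lin_indep_def)
  have inj: "inj_on v I" by (rule lin_indep_inj[OF li])
  have indep: "fvs.independent (v ` I)"
  proof
    assume "fvs.dependent (v ` I)"
    then obtain u where u: "\<exists>w\<in>v ` I. u w \<noteq> 0" "(\<Sum>w\<in>v ` I. (\<lambda>S. u w * w S)) = 0"
      using fvs.dependent_finite[of "v ` I"] fin by auto
    have "lincomb (u \<circ> v) I v = (\<lambda>S. 0)"
    proof
      fix S
      have "lincomb (u \<circ> v) I v S = (\<Sum>w\<in>v ` I. (\<lambda>S. u w * w S)) S"
        by (simp add: lincomb_def fsum_apply sum.reindex[OF inj])
      then show "lincomb (u \<circ> v) I v S = 0" using u(2) by simp
    qed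
    then have "\<forall>k\<in>I. u (v k) = 0" using li by (auto simp: lin_indep_def)
    then show False using u(1) by auto
  qed
  define e where "e = (\<lambda>A (S::nat set). if S = A then (1::complex) else 0)"
  define Y where "Y = e ` Pow {1..m}"
  have finY: "finite Y" by (simp add: Y_def)
  have cardY: "card Y \<le> 2^m"
    unfolding Y_def by (rule order.trans[OF card_image_le]) (simp_all add: card_Pow)
  have spanY: "f \<in> fvs.span Y" if f: "f \<in> Rm m" for f
  proof -
    have "f = (\<Sum>A\<in>Pow {1..m}. (\<lambda>S. f A * e A S))"
    proof
      fix S
      have "(\<Sum>A\<in>Pow {1..m}. (\<lambda>S. f A * e A S)) S = (\<Sum>A\<in>Pow {1..m}. if A = S then f S else 0)"
        unfolding fsum_apply e_def by (rule sum.cong) auto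
      also have "\<dots> = f S" using f by (subst sum.delta) (auto simp: Rm_def)
      finally show "f S = (\<Sum>A\<in>Pow {1..m}. (\<lambda>S. f A * e A S)) S" by simp
    qed
    also have "\<dots> \<in> fvs.span Y"
    proof (rule fvs.span_sum)
      fix A assume A: "A \<in> Pow {1..m}"
      then have "e A \<in> fvs.span Y" by (auto intro: fvs.span_base simp: Y_def)
      then show "(\<lambda>S. f A * e A S) \<in> fvs.span Y" using fvs.span_scale[of "e A" Y "f A"] by simp
    qed
    finally show ?thesis .
  qed
  show "x \<in> cspan I v"
  proof (rule ccontr)
    assume nx: "x \<notin> cspan I v"
    have nsp: "x \<notin> fvs.span (v ` I)"
    proof
      assume "x \<in> fvs.span (v ` I)"
      then obtain u where xu: "x = (\<Sum>w\<in>v ` I. (\<lambda>S. u w * w S))"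
        using fvs.span_finite[of "v ` I"] fin by auto
      have "x = lincomb (u \<circ> v) I v"
        by (simp add: xu lincomb_def fun_eq_iff fsum_apply sum.reindex[OF inj])
      then show False using nx by (auto simp: cspan_def)
    qed
    then have "x \<notin> v ` I" using fvs.span_base by blast
    have ind2: "fvs.independent (insert x (v ` I))"
      by (rule fvs.independent_insertI[OF nsp indep])
    have "insert x (v ` I) \<subseteq> fvs.span Y" using x sub spanY by auto
    then have "card (insert x (v ` I)) \<le> card Y"
      using fvs.independent_span_bound[OF finY ind2] by simp
    moreover have "card (insert x (v ` I)) = card I + 1"
      using \<open>x \<notin> v ` I\<close> fin card_image[OF inj] by simp
    ultimately show False using cardY card by simp
  qed
qed


lemma concat_nth_mem: "i < length xs \<Longrightarrow> k < length (xs!i) \<Longrightarrow> xs!i!k \<in> set (concat xs)"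
  using nth_mem by (fastforce simp: set_concat)

lemma concat_mem_nth: "x \<in> set (concat xs) \<Longrightarrow> \<exists>i<length xs. \<exists>k<length (xs!i). xs!i!k = x"
  by (fastforce simp: set_concat in_set_conv_nth)

lemma distinct_concat_nth_inj:
  "distinct (concat xs) \<Longrightarrow> i < length xs \<Longrightarrow> j < length xs \<Longrightarrow> k < length (xs!i)
   \<Longrightarrow> k' < length (xs!j) \<Longrightarrow> xs!i!k = xs!j!k' \<Longrightarrow> i = j \<and> k = k'"
proof (induct xs arbitrary: i j)
  case Nil thus ?case by simp
next
  case (Cons x xs)
  show ?case
  proof (cases i)
    case 0 show ?thesis
    proof (cases j)
      case 0 thus ?thesis using Cons.prems \<open>i=0\<close> by (simp add: nth_eq_iff_index_eq)
    next
      case (Suc j')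
      have m1: "xs!j'!k' \<in> set (concat xs)" by (rule concat_nth_mem) (use Cons.prems Suc in auto)
      have m2: "x!k \<in> set x" by (rule nth_mem) (use Cons.prems \<open>i=0\<close> in simp)
      have e: "x!k = xs!j'!k'" using Cons.prems(6) \<open>i=0\<close> Suc by simp
      have d: "set x \<inter> set (concat xs) = {}" using Cons.prems(1) by (metis concat.simps(2) distinct_append)
      have "x!k \<in> set x \<inter> set (concat xs)" using m1 m2 e by (simp only: IntI)
      then show ?thesis unfolding d by (rule emptyE)
    qed
  next
    case (Suc i')
    show ?thesis
    proof (cases j)
      case 0
      have m1: "xs!i'!k \<in> set (concat xs)" by (rule concat_nth_mem) (use Cons.prems Suc in auto)
      have m2: "x!k' \<in> set x" by (rule nth_mem) (use Cons.prems \<open>j=0\<close> in simp)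
      have e: "x!k' = xs!i'!k" using Cons.prems(6) \<open>j=0\<close> Suc by simp
      have d: "set x \<inter> set (concat xs) = {}" using Cons.prems(1) by (metis concat.simps(2) distinct_append)
      have "x!k' \<in> set x \<inter> set (concat xs)" using m1 m2 e by (simp only: IntI)
      then show ?thesis unfolding d by (rule emptyE)
    next
      case (Suc j') then show ?thesis using Cons.prems \<open>i = Suc i'\<close> Cons.hyps[of i' j'] by auto
    qed
  qed
qed

lemma qsum_ins: assumes "(u::nat) \<noteq> v"
  shows "(\<Sum>x\<in>{u,v} - S. (if u \<in> insert x S \<and> v \<notin> insert x S then (1::complex)
            else if v \<in> insert x S \<and> u \<notin> insert x S then -1 else 0)) = 0"
proof (cases "u \<in> S")
  case True
  show ?thesis
  proof (cases "v \<in> S")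
    case True
    then have "{u,v} - S = {}" using \<open>u \<in> S\<close> by auto then show ?thesis by simp
  next
    case False
    then have "{u,v} - S = {v}" using \<open>u \<in> S\<close> by auto then show ?thesis using \<open>u \<in> S\<close> by simp
  qed
next
  case False
  show ?thesis
  proof (cases "v \<in> S")
    case True
    then have "{u,v} - S = {u}" using \<open>u \<notin> S\<close> by auto then show ?thesis using \<open>v \<in> S\<close> by simp
  next
    case False
    then have "{u,v} - S = {u,v}" using \<open>u \<notin> S\<close> by auto then show ?thesis using \<open>u \<notin> S\<close> False assms by simp
  qed
qed

lemma qsum_rem: assumes "(u::nat) \<noteq> v"
  shows "(\<Sum>x\<in>S \<inter> {u,v}. (if u \<in> S - {x} \<and> v \<notin> S - {x} then (1::complex)
            else if v \<in> S - {x} \<and> u \<notin> S - {x} then -1 else 0)) = 0"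
proof (cases "u \<in> S")
  case True
  show ?thesis
  proof (cases "v \<in> S")
    case True
    then have "S \<inter> {u,v} = {u,v}" using \<open>u \<in> S\<close> by auto then show ?thesis using \<open>u \<in> S\<close> True assms by simp
  next
    case False
    then have "S \<inter> {u,v} = {u}" using \<open>u \<in> S\<close> by auto then show ?thesis using False by simp
  qed
next
  case False
  show ?thesis
  proof (cases "v \<in> S")
    case True
    then have "S \<inter> {u,v} = {v}" using \<open>u \<notin> S\<close> by auto then show ?thesis using \<open>u \<notin> S\<close> by simp
  next
    case False
    then have "S \<inter> {u,v} = {}" using \<open>u \<notin> S\<close> by auto then show ?thesis by simp
  qed
qed

locale ptab =
  fixes m l :: nat and T :: "nat list list"
  assumes T: "T \<in> tabl m l" and l2: "2*l \<le> m"
begin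

definition a :: "nat \<Rightarrow> nat" where "a i = T!i!0"
definition b :: "nat \<Rightarrow> nat" where "b i = T!i!1"
definition U :: "nat set" where "U = a ` {l..<m-l}"
definition W :: "nat set" where "W = (\<Union>i<l. {a i, b i})"
definition q :: "nat \<Rightarrow> nat set \<Rightarrow> complex" where
  "q i S = (if a i \<in> S \<and> b i \<notin> S then 1 else if b i \<in> S \<and> a i \<notin> S then -1 else 0)"
definition g :: "nat \<Rightarrow> nat set \<Rightarrow> complex" where
  "g j S = (if S \<subseteq> {1..m} \<and> card (S \<inter> U) = j then \<Prod>i<l. q i S else 0)"

lemma lenT: "length T = m - l" using T by (simp add: tabl_def)
lemma rowlen: "i < m - l \<Longrightarrow> length (T!i) = (if i < l then 2 else 1)" using T by (simp add: tabl_def)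
lemma lm: "l \<le> m - l" using l2 by simp
lemma distT: "distinct (concat T)" using T by (simp add: tabl_def)
lemma setT: "set (concat T) = {1..m}" using T by (simp add: tabl_def)
lemma ab_lt: "i < l \<Longrightarrow> a i < b i" using T by (simp add: tabl_def a_def b_def)
lemma col: "Suc i < m - l \<Longrightarrow> k < length (T!Suc i) \<Longrightarrow> T!i!k < T!(Suc i)!k"
  using T by (simp add: tabl_def)

lemma a_mem: assumes "i < m - l" shows "a i \<in> {1..m}"
proof -
  have "0 < length (T!i)" using rowlen[OF assms] by simp
  then have "T!i!0 \<in> set (concat T)" using assms lenT by (intro concat_nth_mem) auto
  then show ?thesis by (simp only: a_def setT)
qed
lemma b_mem: assumes "i < l" shows "b i \<in> {1..m}"
proof -
  have "1 < length (T!i)" using rowlen[of i] assms lm by simp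
  then have "T!i!1 \<in> set (concat T)" using assms lenT lm by (intro concat_nth_mem) auto
  then show ?thesis by (simp only: b_def setT)
qed
lemma a_inj: "i < m-l \<Longrightarrow> i' < m-l \<Longrightarrow> a i = a i' \<Longrightarrow> i = i'"
  using distinct_concat_nth_inj[OF distT, of i i' 0 0] rowlen[of i] rowlen[of i'] lenT
  by (simp add: a_def split: if_splits)
lemma b_inj: "i < l \<Longrightarrow> i' < l \<Longrightarrow> b i = b i' \<Longrightarrow> i = i'"
  using distinct_concat_nth_inj[OF distT, of i i' 1 1] rowlen[of i] rowlen[of i'] lenT lm
  by (simp add: b_def)
lemma ab_ne: "i < m-l \<Longrightarrow> i' < l \<Longrightarrow> a i \<noteq> b i'"
  using distinct_concat_nth_inj[OF distT, of i i' 0 1] rowlen[of i] rowlen[of i'] lenT lm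
  by (auto simp: a_def b_def split: if_splits)

lemma cover: "{1..m} = a ` {..<m-l} \<union> b ` {..<l}"
proof
  show "a ` {..<m - l} \<union> b ` {..<l} \<subseteq> {1..m}" using a_mem b_mem by auto
next
  show "{1..m} \<subseteq> a ` {..<m - l} \<union> b ` {..<l}"
  proof
    fix x assume "x \<in> {1..m}"
    then have "x \<in> set (concat T)" by (simp only: setT)
    from concat_mem_nth[OF this] obtain i k where ik: "i < m - l" "k < length (T!i)" "T!i!k = x"
      unfolding lenT by blast
    show "x \<in> a ` {..<m - l} \<union> b ` {..<l}"
    proof (cases "k = 0")
      case True thus ?thesis using ik by (auto simp: a_def)
    next
      case False
      then have "k = 1" "i < l" using ik rowlen[of i] by (auto split: if_splits)
      thus ?thesis using ik by (auto simp: b_def)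
    qed
  qed
qed

lemma finU: "finite U" by (simp add: U_def)
lemma finW: "finite W" by (simp add: W_def)
lemma cardU: "card U = m - 2*l"
proof -
  have "inj_on a {l..<m-l}" using a_inj unfolding inj_on_def by (metis atLeastLessThan_iff)
  thus ?thesis by (simp add: U_def card_image)
qed

lemma W_eq: "W = a ` {..<l} \<union> b ` {..<l}" by (auto simp: W_def)

lemma UW_cover: "{1..m} = U \<union> W"
proof -
  have e: "{..<m-l} = {..<l} \<union> {l..<m-l}" using lm by auto
  have "a ` {..<m-l} = a ` {..<l} \<union> U" unfolding U_def e by (rule image_Un)
  then show ?thesis using cover unfolding W_eq by (simp add: Un_ac)
qed

lemma U_notpair: assumes "x \<in> U" "i < l" shows "x \<noteq> a i \<and> x \<noteq> b i"
proof -
  obtain j where j: "x = a j" "l \<le> j" "j < m-l" using assms(1) by (auto simp: U_def)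
  have "a j \<noteq> a i" using a_inj[of j i] j assms(2) lm by auto
  moreover have "a j \<noteq> b i" using ab_ne[of j i] j assms(2) by auto
  ultimately show ?thesis using j by simp
qed

lemma UW_disj: "U \<inter> W = {}"
  using U_notpair by (auto simp: W_def)

lemma a_ne_b: "i < l \<Longrightarrow> a i \<noteq> b i" using ab_lt by (metis less_irrefl)

lemma pair_disj: "i < l \<Longrightarrow> i' < l \<Longrightarrow> i \<noteq> i' \<Longrightarrow> {a i, b i} \<inter> {a i', b i'} = {}"
  using a_inj[of i i'] b_inj[of i i'] ab_ne[of i i'] ab_ne[of i' i] lm by auto

lemma pair_disj2: "\<forall>i\<in>{..<l}. \<forall>j\<in>{..<l}. i \<noteq> j \<longrightarrow> (S \<inter> {a i, b i}) \<inter> (S \<inter> {a j, b j}) = {}"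
proof (intro ballI impI)
  fix i j assume "i \<in> {..<l}" "j \<in> {..<l}" "i \<noteq> j"
  then show "(S \<inter> {a i, b i}) \<inter> (S \<inter> {a j, b j}) = {}" using pair_disj[of i j] by auto
qed
lemma pair_disj3: "\<forall>i\<in>{..<l}. \<forall>j\<in>{..<l}. i \<noteq> j \<longrightarrow> ({a i, b i} - S) \<inter> ({a j, b j} - S) = {}"
proof (intro ballI impI)
  fix i j assume "i \<in> {..<l}" "j \<in> {..<l}" "i \<noteq> j"
  then show "({a i, b i} - S) \<inter> ({a j, b j} - S) = {}" using pair_disj[of i j] by auto
qed

lemma q_remove: "x \<notin> {a i, b i} \<Longrightarrow> q i (S - {x}) = q i S"
  by (auto simp: q_def)
lemma q_insert: "x \<notin> {a i, b i} \<Longrightarrow> q i (insert x S) = q i S"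
  by (auto simp: q_def)

lemma prodq_remove_out: "x \<notin> W \<Longrightarrow> (\<Prod>i<l. q i (S - {x})) = (\<Prod>i<l. q i S)"
  by (rule prod.cong) (auto simp: W_def q_remove)
lemma prodq_insert_out: "x \<notin> W \<Longrightarrow> (\<Prod>i<l. q i (insert x S)) = (\<Prod>i<l. q i S)"
  by (rule prod.cong) (auto simp: W_def q_insert)

lemma sumW_remove: "(\<Sum>x\<in>S\<inter>W. \<Prod>i<l. q i (S - {x})) = 0"
proof -
  define f where "f = (\<lambda>x. \<Prod>i<l. q i (S - {x}))"
  have eq: "S \<inter> W = (\<Union>i\<in>{..<l}. S \<inter> {a i, b i})" by (auto simp: W_def)
  have "(\<Sum>x\<in>S\<inter>W. \<Prod>i<l. q i (S - {x})) = sum f (\<Union>i\<in>{..<l}. S \<inter> {a i, b i})"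
    unfolding f_def eq ..
  also have "\<dots> = (\<Sum>i<l. sum f (S \<inter> {a i, b i}))"
    by (rule sum.UNION_disjoint) (simp_all add: pair_disj2)
  also have "\<dots> = (\<Sum>i<l. \<Sum>x\<in>S \<inter> {a i, b i}. \<Prod>k<l. q k (S - {x}))"
    unfolding f_def ..
  finally have "(\<Sum>x\<in>S\<inter>W. \<Prod>i<l. q i (S - {x})) = (\<Sum>i<l. \<Sum>x\<in>S \<inter> {a i, b i}. \<Prod>k<l. q k (S - {x}))" .
  also have "\<dots> = 0"
  proof (rule sum.neutral, rule ballI)
    fix i assume i: "i \<in> {..<l}"
    have "(\<Sum>x\<in>S \<inter> {a i, b i}. \<Prod>k<l. q k (S - {x}))
        = (\<Sum>x\<in>S \<inter> {a i, b i}. q i (S - {x}) * (\<Prod>k\<in>{..<l}-{i}. q k S))"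
    proof (rule sum.cong[OF refl])
      fix x assume x: "x \<in> S \<inter> {a i, b i}"
      have "(\<Prod>k\<in>{..<l}-{i}. q k (S - {x})) = (\<Prod>k\<in>{..<l}-{i}. q k S)"
      proof (rule prod.cong[OF refl])
        fix k assume "k \<in> {..<l} - {i}"
        then have "x \<notin> {a k, b k}" using pair_disj[of i k] i x by auto
        then show "q k (S - {x}) = q k S" by (rule q_remove)
      qed
      then show "(\<Prod>k<l. q k (S - {x})) = q i (S - {x}) * (\<Prod>k\<in>{..<l}-{i}. q k S)"
        using i by (subst prod.remove[of "{..<l}" i]) auto
    qed
    also have "\<dots> = (\<Sum>x\<in>S \<inter> {a i, b i}. q i (S - {x})) * (\<Prod>k\<in>{..<l}-{i}. q k S)"
      by (simp add: sum_distrib_right)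
    also have "(\<Sum>x\<in>S \<inter> {a i, b i}. q i (S - {x})) = 0"
      using qsum_rem[OF a_ne_b[of i], of S] i unfolding q_def by simp
    finally show "(\<Sum>x\<in>S \<inter> {a i, b i}. \<Prod>k<l. q k (S - {x})) = 0" by simp
  qed
  finally show ?thesis .
qed

lemma sumW_insert: "(\<Sum>x\<in>W-S. \<Prod>i<l. q i (insert x S)) = 0"
proof -
  define f where "f = (\<lambda>x. \<Prod>i<l. q i (insert x S))"
  have eq: "W - S = (\<Union>i\<in>{..<l}. {a i, b i} - S)" by (auto simp: W_def)
  have "(\<Sum>x\<in>W-S. \<Prod>i<l. q i (insert x S)) = sum f (\<Union>i\<in>{..<l}. {a i, b i} - S)"
    unfolding f_def eq ..
  also have "\<dots> = (\<Sum>i<l. sum f ({a i, b i} - S))"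
    by (rule sum.UNION_disjoint) (simp_all add: pair_disj3)
  also have "\<dots> = (\<Sum>i<l. \<Sum>x\<in>{a i, b i} - S. \<Prod>k<l. q k (insert x S))"
    unfolding f_def ..
  finally have "(\<Sum>x\<in>W-S. \<Prod>i<l. q i (insert x S)) = (\<Sum>i<l. \<Sum>x\<in>{a i, b i} - S. \<Prod>k<l. q k (insert x S))" .
  also have "\<dots> = 0"
  proof (rule sum.neutral, rule ballI)
    fix i assume i: "i \<in> {..<l}"
    have "(\<Sum>x\<in>{a i, b i} - S. \<Prod>k<l. q k (insert x S))
        = (\<Sum>x\<in>{a i, b i} - S. q i (insert x S) * (\<Prod>k\<in>{..<l}-{i}. q k S))"
    proof (rule sum.cong[OF refl])
      fix x assume x: "x \<in> {a i, b i} - S"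
      have "(\<Prod>k\<in>{..<l}-{i}. q k (insert x S)) = (\<Prod>k\<in>{..<l}-{i}. q k S)"
      proof (rule prod.cong[OF refl])
        fix k assume "k \<in> {..<l} - {i}"
        then have "x \<notin> {a k, b k}" using pair_disj[of i k] i x by auto
        then show "q k (insert x S) = q k S" by (rule q_insert)
      qed
      then show "(\<Prod>k<l. q k (insert x S)) = q i (insert x S) * (\<Prod>k\<in>{..<l}-{i}. q k S)"
        using i by (subst prod.remove[of "{..<l}" i]) auto
    qed
    also have "\<dots> = (\<Sum>x\<in>{a i, b i} - S. q i (insert x S)) * (\<Prod>k\<in>{..<l}-{i}. q k S)"
      by (simp add: sum_distrib_right)
    also have "(\<Sum>x\<in>{a i, b i} - S. q i (insert x S)) = 0"
      using qsum_ins[OF a_ne_b[of i], of S] i unfolding q_def by simp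
    finally show "(\<Sum>x\<in>{a i, b i} - S. \<Prod>k<l. q k (insert x S)) = 0" by simp
  qed
  finally show ?thesis .
qed

end

context ptab
begin

lemma g_out: "\<not> S \<subseteq> {1..m} \<Longrightarrow> g j S = 0" by (simp add: g_def)
lemma g_Rm: "g j S \<noteq> 0 \<Longrightarrow> S \<subseteq> {1..m}" by (auto simp: g_def split: if_splits)
lemma g_infinite: "infinite S \<Longrightarrow> g j S = 0"
  using finite_subset[of S "{1..m}"] by (auto simp: g_def)

lemma U_sub: "U \<subseteq> {1..m}" using UW_cover by auto
lemma W_sub: "W \<subseteq> {1..m}" using UW_cover by auto

lemma g_E: "rmul (omega m) (g j) S = of_nat (Suc j) * g (Suc j) S"
proof (cases "finite S")
  case False
  then show ?thesis by (simp add: rmul_infinite g_infinite)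
next
  case fS: True
  have eq: "rmul (omega m) (g j) S = (\<Sum>x\<in>S\<inter>{1..m}. g j (S - {x}))" by (rule rmul_omega[OF fS])
  show ?thesis
  proof (cases "S \<subseteq> {1..m}")
    case False
    then obtain y where y: "y \<in> S" "y \<notin> {1..m}" by blast
    have "g j (S - {x}) = 0" if "x \<in> S \<inter> {1..m}" for x
      using y that by (intro g_out) auto
    then show ?thesis using eq False by (simp add: g_def)
  next
    case True
    define P where "P = (\<Prod>i<l. q i S)"
    define c where "c = card (S \<inter> U)"
    have split: "S \<inter> {1..m} = (S \<inter> U) \<union> (S \<inter> W)" using True UW_cover by auto
    have disj: "(S \<inter> U) \<inter> (S \<inter> W) = {}" using UW_disj by auto
    have s1: "(\<Sum>x\<in>S\<inter>U. g j (S - {x})) = of_nat c * (if c = Suc j then P else 0)"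
    proof -
      have "g j (S - {x}) = (if c = Suc j then P else 0)" if x: "x \<in> S\<inter>U" for x
      proof -
        have "(S - {x}) \<inter> U = (S \<inter> U) - {x}" by auto
        hence c1: "card ((S - {x}) \<inter> U) = c - 1" using x fS by (simp add: c_def)
        have "0 < c" unfolding c_def using x fS by (subst card_gt_0_iff) auto
        have "x \<notin> W" using x UW_disj by auto
        hence "(\<Prod>i<l. q i (S - {x})) = P" unfolding P_def by (rule prodq_remove_out)
        thus ?thesis using True c1 \<open>0 < c\<close> by (auto simp: g_def)
      qed
      hence "(\<Sum>x\<in>S\<inter>U. g j (S - {x})) = (\<Sum>x\<in>S\<inter>U. (if c = Suc j then P else 0))" by simp
      thus ?thesis by (simp add: c_def)
    qed
    have s2: "(\<Sum>x\<in>S\<inter>W. g j (S - {x})) = 0"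
    proof -
      have "g j (S - {x}) = (if c = j then \<Prod>i<l. q i (S - {x}) else 0)" if x: "x \<in> S\<inter>W" for x
      proof -
        have "(S - {x}) \<inter> U = S \<inter> U" using x UW_disj by auto
        thus ?thesis using True by (auto simp: g_def c_def)
      qed
      hence "(\<Sum>x\<in>S\<inter>W. g j (S - {x})) = (\<Sum>x\<in>S\<inter>W. if c = j then \<Prod>i<l. q i (S - {x}) else 0)" by simp
      thus ?thesis using sumW_remove[of S] by (cases "c = j") simp_all
    qed
    have "rmul (omega m) (g j) S = (\<Sum>x\<in>S\<inter>U. g j (S - {x})) + (\<Sum>x\<in>S\<inter>W. g j (S - {x}))"
      unfolding eq split using disj fS by (simp add: sum.union_disjoint)
    also have "\<dots> = of_nat c * (if c = Suc j then P else 0)" using s1 s2 by simp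
    also have "\<dots> = of_nat (Suc j) * g (Suc j) S" using True by (auto simp: g_def P_def c_def)
    finally show ?thesis .
  qed
qed

lemma g_F: "Fop m (g j) S = (if j = 0 then 0 else of_nat (card U + 1 - j) * g (j - 1) S)"
proof (cases "S \<subseteq> {1..m}")
  case False
  have "g j (insert x S) = 0" for x using False by (intro g_out) auto
  thus ?thesis using False by (simp add: Fop_def g_def)
next
  case True
  have fS: "finite S" using True finite_subset by blast
  define P where "P = (\<Prod>i<l. q i S)"
  define c where "c = card (S \<inter> U)"
  have split: "{1..m} - S = (U - S) \<union> (W - S)" using UW_cover by auto
  have disj: "(U - S) \<inter> (W - S) = {}" using UW_disj by auto
  have s1: "(\<Sum>x\<in>U-S. g j (insert x S)) = of_nat (card (U - S)) * (if Suc c = j then P else 0)"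
  proof -
    have "g j (insert x S) = (if Suc c = j then P else 0)" if x: "x \<in> U - S" for x
    proof -
      have "(insert x S) \<inter> U = insert x (S \<inter> U)" using x by auto
      hence c1: "card ((insert x S) \<inter> U) = Suc c" using x fS by (simp add: c_def)
      have "x \<notin> W" using x UW_disj by auto
      hence "(\<Prod>i<l. q i (insert x S)) = P" unfolding P_def by (rule prodq_insert_out)
      moreover have "insert x S \<subseteq> {1..m}" using x True U_sub by auto
      ultimately show ?thesis using c1 by (auto simp: g_def)
    qed
    hence "(\<Sum>x\<in>U-S. g j (insert x S)) = (\<Sum>x\<in>U-S. (if Suc c = j then P else 0))" by simp
    thus ?thesis by simp
  qed
  have s2: "(\<Sum>x\<in>W-S. g j (insert x S)) = 0"
  proof -
    have "g j (insert x S) = (if c = j then \<Prod>i<l. q i (insert x S) else 0)" if x: "x \<in> W-S" for x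
    proof -
      have "(insert x S) \<inter> U = S \<inter> U" using x UW_disj by auto
      moreover have "insert x S \<subseteq> {1..m}" using x True W_sub by auto
      ultimately show ?thesis by (auto simp: g_def c_def)
    qed
    hence "(\<Sum>x\<in>W-S. g j (insert x S)) = (\<Sum>x\<in>W-S. if c = j then \<Prod>i<l. q i (insert x S) else 0)" by simp
    thus ?thesis using sumW_insert[of S] by (cases "c = j") simp_all
  qed
  have "Fop m (g j) S = (\<Sum>x\<in>U-S. g j (insert x S)) + (\<Sum>x\<in>W-S. g j (insert x S))"
    unfolding Fop_def split using disj finU finW by (simp add: sum.union_disjoint)
  also have "\<dots> = of_nat (card (U - S)) * (if Suc c = j then P else 0)" using s1 s2 by simp
  also have "card (U - S) = card U - c"
    using card_Diff_subset_Int[of U S] finU by (simp add: c_def Int_commute)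
  also have "of_nat (card U - c) * (if Suc c = j then P else 0)
      = (if j = 0 then 0 else of_nat (card U + 1 - j) * g (j - 1) S)"
    using True by (auto simp: g_def P_def c_def)
  finally show ?thesis .
qed

lemma Fpow_g: "k \<le> j \<Longrightarrow> (Fop m ^^ k) (g j) = (\<lambda>S. (\<Prod>t<k. of_nat (card U + 1 - (j - t))) * g (j - k) S)"
proof (induct k)
  case 0 show ?case by simp
next
  case (Suc k)
  hence IH: "(Fop m ^^ k) (g j) = (\<lambda>S. (\<Prod>t<k. of_nat (card U + 1 - (j - t))) * g (j - k) S)" by simp
  have "(Fop m ^^ Suc k) (g j) = Fop m ((Fop m ^^ k) (g j))" by simp
  also have "\<dots> = (\<lambda>S. (\<Prod>t<k. of_nat (card U + 1 - (j - t))) * Fop m (g (j - k)) S)"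
    by (simp add: IH Fop_scale)
  also have "\<dots> = (\<lambda>S. (\<Prod>t<Suc k. of_nat (card U + 1 - (j - t))) * g (j - Suc k) S)"
  proof
    fix S
    have "j - k \<noteq> 0" "j - k - 1 = j - Suc k" using Suc.prems by auto
    then show "(\<Prod>t<k. of_nat (card U + 1 - (j - t))) * Fop m (g (j - k)) S =
        (\<Prod>t<Suc k. of_nat (card U + 1 - (j - t))) * g (j - Suc k) S"
      by (simp add: g_F mult.assoc)
  qed
  finally show ?case .
qed

lemma Fpow_g_zero: assumes jk: "j < k" shows "(Fop m ^^ k) (g j) = (\<lambda>S. 0)"
proof -
  have "(Fop m ^^ Suc j) (g j) = Fop m ((Fop m ^^ j) (g j))" by simp
  also have "\<dots> = (\<lambda>S. 0)" using Fpow_g[of j j] by (simp add: Fop_scale g_F)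
  finally have h: "(Fop m ^^ Suc j) (g j) = (\<lambda>S. 0)" .
  have "k = (k - Suc j) + Suc j" using jk by simp
  then have "(Fop m ^^ k) (g j) = (Fop m ^^ (k - Suc j)) ((Fop m ^^ Suc j) (g j))"
    by (metis funpow_add comp_apply)
  then show ?thesis using h Fpow_zero by simp
qed

lemma Fpow_g_nz: "j \<le> card U \<Longrightarrow> (\<Prod>t<j. (of_nat (card U + 1 - (j - t)) :: complex)) \<noteq> 0"
proof -
  assume j: "j \<le> card U"
  have "(\<Prod>t<j. card U + 1 - (j - t)) \<noteq> 0" using j by (auto simp: prod_zero_iff)
  then show ?thesis by (metis of_nat_0_eq_iff of_nat_prod)
qed

end

context ptab
begin

definition Q :: "nat set \<Rightarrow> nat set \<Rightarrow> complex" where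
  "Q I S = (if S \<subseteq> (\<Union>i\<in>I. {a i, b i}) then \<Prod>i\<in>I. q i S else 0)"

definition Fi :: "nat \<Rightarrow> (nat set \<Rightarrow> complex) \<Rightarrow> nat set \<Rightarrow> complex" where
  "Fi i acc = rmul (\<lambda>S. yv (T!i!0) S - yv (T!i!1) S) acc"

lemma foldr_Q: "distinct is \<Longrightarrow> set is \<subseteq> {..<l} \<Longrightarrow>
  foldr Fi is rone = Q (set is)"
proof (induct "is")
  case Nil show ?case by (simp add: Q_def rone_def fun_eq_iff)
next
  case (Cons i js)
  define I where "I = set js"
  define WI where "WI = (\<Union>k\<in>I. {a k, b k})"
  have i: "i < l" "i \<notin> I" using Cons.prems by (auto simp: I_def)
  have finI: "finite I" by (simp add: I_def)
  have IH: "foldr Fi js rone = Q I"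
    using Cons by (simp add: I_def)
  have disjk: "{a i, b i} \<inter> {a k, b k} = {}" if "k \<in> I" for k
  proof -
    have k: "k < l" "i \<noteq> k" using that i Cons.prems by (auto simp: I_def)
    show ?thesis by (rule pair_disj[OF i(1) k(1) k(2)])
  qed
  have out1: "a i \<notin> WI"
  proof
    assume "a i \<in> WI" then obtain k where "k \<in> I" "a i \<in> {a k, b k}" unfolding WI_def by blast
    then show False using disjk[of k] by auto
  qed
  have out2: "b i \<notin> WI"
  proof
    assume "b i \<in> WI" then obtain k where "k \<in> I" "b i \<in> {a k, b k}" unfolding WI_def by blast
    then show False using disjk[of k] by auto
  qed
  have prodI: "(\<Prod>k\<in>I. q k (S - {x})) = (\<Prod>k\<in>I. q k S)" if "x \<in> {a i, b i}" for x S
  proof (rule prod.cong[OF refl])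
    fix k assume "k \<in> I" then have "x \<notin> {a k, b k}" using disjk[of k] that by auto
    then show "q k (S - {x}) = q k S" by (rule q_remove)
  qed
  have Qins: "Q (insert i I) S = (if S \<subseteq> {a i, b i} \<union> WI then q i S * (\<Prod>k\<in>I. q k S) else 0)" for S
    using i finI by (simp add: Q_def WI_def)
  have QI: "Q I S = (if S \<subseteq> WI then (\<Prod>k\<in>I. q k S) else 0)" for S
    by (simp add: Q_def WI_def)
  show ?case
  proof
    fix S
    show "foldr Fi (i # js) rone S = Q (set (i # js)) S"
    proof (cases "finite S")
      case False
      have "finite ({a i, b i} \<union> WI)" using finI by (simp add: WI_def)
      then have "\<not> S \<subseteq> {a i, b i} \<union> WI" using False finite_subset by blast
      then show ?thesis using False by (simp add: rmul_infinite Qins I_def[symmetric] Fi_def)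
    next
      case fS: True
      have "foldr Fi (i # js) rone S
          = rmul (\<lambda>S. yv (a i) S - yv (b i) S) (Q I) S" by (simp add: IH a_def b_def Fi_def)
      also have "\<dots> = (if a i \<in> S then Q I (S - {a i}) else 0) - (if b i \<in> S then Q I (S - {b i}) else 0)"
        by (simp add: rmul_diff_left rmul_yv fS)
      also have "\<dots> = Q (insert i I) S"
      proof (cases "a i \<in> S")
        case aS: True
        show ?thesis
        proof (cases "b i \<in> S")
          case bS: True
          have "\<not> S - {a i} \<subseteq> WI" using bS out2 a_ne_b[OF i(1)] by auto
          moreover have "\<not> S - {b i} \<subseteq> WI" using aS out1 a_ne_b[OF i(1)] by auto
          moreover have "q i S = 0" using aS bS by (simp add: q_def)
          ultimately show ?thesis using aS bS by (simp add: Qins QI)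
        next
          case bS: False
          have "(S - {a i} \<subseteq> WI) = (S \<subseteq> {a i, b i} \<union> WI)" using bS by auto
          moreover have "q i S = 1" using aS bS by (simp add: q_def)
          ultimately show ?thesis using aS bS prodI[of "a i" S] by (simp add: Qins QI)
        qed
      next
        case aS: False
        show ?thesis
        proof (cases "b i \<in> S")
          case bS: True
          have "(S - {b i} \<subseteq> WI) = (S \<subseteq> {a i, b i} \<union> WI)" using aS by auto
          moreover have "q i S = -1" using aS bS a_ne_b[OF i(1)] by (simp add: q_def)
          ultimately show ?thesis using aS bS prodI[of "b i" S] by (simp add: Qins QI)
        next
          case bS: False
          have "q i S = 0" using aS bS by (simp add: q_def)
          then show ?thesis using aS bS by (simp add: Qins)
        qed
      qed
      finally show ?thesis by (simp add: I_def)
    qed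
  qed
qed

lemma VT_eq: "VT l T = g 0"
proof -
  have "VT l T = foldr Fi [0..<l] rone" by (simp add: VT_def Fi_def[abs_def])
  also have "\<dots> = Q {..<l}" using foldr_Q[of "[0..<l]"] by (simp add: atLeast0LessThan)
  also have "Q {..<l} = g 0"
  proof
    fix S
    have "(S \<subseteq> (\<Union>i\<in>{..<l}. {a i, b i})) = (S \<subseteq> {1..m} \<and> card (S \<inter> U) = 0)"
    proof
      assume "S \<subseteq> (\<Union>i\<in>{..<l}. {a i, b i})" then have sW: "S \<subseteq> W" by (simp add: W_def)
      have "S \<inter> U = {}" using sW UW_disj by auto
      then show "S \<subseteq> {1..m} \<and> card (S \<inter> U) = 0" using sW W_sub by auto
    next
      assume h: "S \<subseteq> {1..m} \<and> card (S \<inter> U) = 0"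
      have "finite (S \<inter> U)" using finU by simp
      then have "S \<inter> U = {}" using h by simp
      then show "S \<subseteq> (\<Union>i\<in>{..<l}. {a i, b i})" using h UW_cover by (auto simp: W_def)
    qed
    then show "Q {..<l} S = g 0 S" by (simp add: Q_def g_def)
  qed
  finally show ?thesis .
qed

lemma rho_g: "rmul (rpow (omega m) j) (VT l T) = (\<lambda>S. fact j * g j S)"
proof (induct j)
  case 0
  have "rpow (omega m) 0 = rone" by (simp add: rpow_def)
  then show ?case by (simp add: VT_eq rmul_rone g_infinite)
next
  case (Suc j)
  have "rmul (rpow (omega m) (Suc j)) (VT l T) = rmul (omega m) (rmul (rpow (omega m) j) (VT l T))"
    by (simp add: rpow_Suc rmul_assoc)
  also have "\<dots> = rmul (omega m) (\<lambda>S. fact j * g j S)" by (simp add: Suc)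
  also have "\<dots> = (\<lambda>S. fact j * rmul (omega m) (g j) S)" by (rule rmul_scale_right)
  also have "\<dots> = (\<lambda>S. fact (Suc j) * g (Suc j) S)" by (simp add: g_E fact_Suc algebra_simps)
  finally show ?case .
qed

definition B :: "nat set" where "B = b ` {..<l}"

lemma b_inj_on: "inj_on b {..<l}" using b_inj unfolding inj_on_def by (metis lessThan_iff)
lemma cardB: "card B = l" by (simp add: B_def card_image[OF b_inj_on])

lemma g0_B: "g 0 B = (-1)^l"
proof -
  have sub: "B \<subseteq> {1..m}" using b_mem by (auto simp: B_def)
  have "B \<inter> U = {}" using U_notpair by (auto simp: B_def)
  hence c: "card (B \<inter> U) = 0" by simp
  have "q i B = -1" if i: "i < l" for i
  proof -
    have "b i \<in> B" using i by (simp add: B_def)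
    moreover have "a i \<notin> B"
    proof
      assume "a i \<in> B" then obtain k where "k < l" "a i = b k" by (auto simp: B_def)
      then show False using ab_ne[of i k] i lm by simp
    qed
    ultimately show ?thesis by (simp add: q_def)
  qed
  hence "(\<Prod>i<l. q i B) = (\<Prod>i<l. -1)" by (intro prod.cong) simp_all
  thus ?thesis using sub c by (simp add: g_def)
qed

lemma g0_le:
  assumes nz: "g 0 S \<noteq> 0"
  shows "(\<Sum>x\<in>S. x) \<le> (\<Sum>x\<in>B. x) \<and> ((\<Sum>x\<in>S. x) = (\<Sum>x\<in>B. x) \<longrightarrow> S = B)"
proof -
  have sub: "S \<subseteq> {1..m}" and c: "card (S \<inter> U) = 0" and P: "(\<Prod>i<l. q i S) \<noteq> 0"
    using nz by (auto simp: g_def split: if_splits)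
  have "finite (S \<inter> U)" using finU by simp
  then have SU: "S \<inter> U = {}" using c by simp
  have q: "q i S \<noteq> 0" if "i < l" for i using P that by (simp add: prod_zero_iff)
  have ex: "(a i \<in> S) = (b i \<notin> S)" if "i < l" for i using q[OF that] by (auto simp: q_def split: if_splits)
  define ch where "ch i = (if a i \<in> S then a i else b i)" for i
  have SW: "S \<subseteq> W" using sub SU UW_cover by auto
  have Sch: "S = ch ` {..<l}"
  proof
    show "S \<subseteq> ch ` {..<l}"
    proof
      fix x assume x: "x \<in> S"
      then obtain i where i: "i < l" "x = a i \<or> x = b i" using SW by (auto simp: W_def)
      have "ch i = x" using i x ex[OF i(1)] by (auto simp: ch_def)
      thus "x \<in> ch ` {..<l}" using i by auto
    qed
  next
    show "ch ` {..<l} \<subseteq> S" using ex by (auto simp: ch_def)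
  qed
  have chinj: "inj_on ch {..<l}"
  proof (rule inj_onI)
    fix i i' assume ii: "i \<in> {..<l}" "i' \<in> {..<l}" "ch i = ch i'"
    then show "i = i'" using a_inj[of i i'] b_inj[of i i'] ab_ne[of i i'] ab_ne[of i' i] lm
      by (auto simp: ch_def split: if_splits)
  qed
  have le: "ch i \<le> b i" if "i < l" for i using ab_lt[OF that] by (simp add: ch_def)
  have sS: "(\<Sum>x\<in>S. x) = (\<Sum>i<l. ch i)" unfolding Sch by (simp add: sum.reindex[OF chinj])
  have sB: "(\<Sum>x\<in>B. x) = (\<Sum>i<l. b i)" unfolding B_def by (simp add: sum.reindex[OF b_inj_on])
  have 1: "(\<Sum>i<l. ch i) \<le> (\<Sum>i<l. b i)" by (rule sum_mono) (simp add: le)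
  have 2: "S = B" if eq: "(\<Sum>i<l. ch i) = (\<Sum>i<l. b i)"
  proof -
    have all: "\<forall>i<l. ch i = b i"
    proof (rule ccontr)
      assume "\<not> (\<forall>i<l. ch i = b i)"
      then obtain i where i: "i < l" "ch i \<noteq> b i" by auto
      hence "ch i < b i" using le[OF i(1)] by simp
      hence "(\<Sum>i<l. ch i) < (\<Sum>i<l. b i)" using le i by (intro sum_strict_mono_ex1) auto
      thus False using eq by simp
    qed
    have "ch ` {..<l} = b ` {..<l}" by (rule image_cong) (use all in auto)
    thus ?thesis using Sch by (simp add: B_def)
  qed
  show ?thesis using 1 2 sS sB by simp
qed

lemma col1_sorted: "sorted_wrt (<) (map a [0..<m-l])"
proof -
  have "a i < a (Suc i)" if "Suc i < m - l" for i
    using col[OF that, of 0] rowlen[OF that] by (simp add: a_def split: if_splits)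
  then show ?thesis by (simp add: sorted_wrt_iff_nth_Suc_transp[OF transp_on_less])
qed

lemma col2_sorted: "sorted_wrt (<) (map b [0..<l])"
proof -
  have "b i < b (Suc i)" if "Suc i < l" for i
  proof -
    have s: "Suc i < m - l" using that lm by simp
    show ?thesis using col[OF s, of 1] rowlen[OF s] that by (simp add: b_def)
  qed
  then show ?thesis by (simp add: sorted_wrt_iff_nth_Suc_transp[OF transp_on_less])
qed

lemma col1_set: "set (map a [0..<m-l]) = {1..m} - B"
proof -
  have d: "x \<notin> B" if "x \<in> a ` {..<m-l}" for x
  proof
    assume "x \<in> B"
    then obtain k where k: "k < l" "x = b k" by (auto simp: B_def)
    from that obtain i0 where "i0 \<in> {..<m-l}" "x = a i0" by (rule imageE)
    then obtain i where i: "i < m-l" "x = a i" by auto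
    show False using ab_ne[OF i(1) k(1)] i k by simp
  qed
  have "set (map a [0..<m-l]) = a ` {..<m-l}" by (simp add: atLeast0LessThan)
  then show ?thesis using cover d unfolding B_def by auto
qed

lemma col2_set: "set (map b [0..<l]) = B" by (simp add: B_def atLeast0LessThan)

end

lemma ptab_det:
  assumes p1: "ptab m l T" and p2: "ptab m l T'"
    and eqB: "(\<lambda>i. T!i!1) ` {..<l} = (\<lambda>i. T'!i!1) ` {..<l}"
  shows "T = T'"
proof -
  interpret t1: ptab m l T by (rule p1)
  interpret t2: ptab m l T' by (rule p2)
  have B: "t1.B = t2.B" using eqB by (simp add: t1.B_def t2.B_def t1.b_def t2.b_def)
  have c1: "map t1.a [0..<m-l] = map t2.a [0..<m-l]"
  proof (rule sorted_distinct_set_unique)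
    show "sorted (map t1.a [0..<m-l])" "distinct (map t1.a [0..<m-l])"
      using t1.col1_sorted unfolding strict_sorted_iff by auto
    show "sorted (map t2.a [0..<m-l])" "distinct (map t2.a [0..<m-l])"
      using t2.col1_sorted unfolding strict_sorted_iff by auto
    show "set (map t1.a [0..<m-l]) = set (map t2.a [0..<m-l])"
      unfolding t1.col1_set t2.col1_set B ..
  qed
  have c2: "map t1.b [0..<l] = map t2.b [0..<l]"
  proof (rule sorted_distinct_set_unique)
    show "sorted (map t1.b [0..<l])" "distinct (map t1.b [0..<l])"
      using t1.col2_sorted unfolding strict_sorted_iff by auto
    show "sorted (map t2.b [0..<l])" "distinct (map t2.b [0..<l])"
      using t2.col2_sorted unfolding strict_sorted_iff by auto
    show "set (map t1.b [0..<l]) = set (map t2.b [0..<l])"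
      unfolding t1.col2_set t2.col2_set B ..
  qed
  show "T = T'"
  proof (rule nth_equalityI)
    show "length T = length T'" using t1.lenT t2.lenT by simp
    fix i assume i: "i < length T"
    hence i': "i < m - l" using t1.lenT by simp
    have ai: "t1.a i = t2.a i"
    proof -
      show ?thesis using c1 i' by auto
    qed
    show "T!i = T'!i"
    proof (rule nth_equalityI)
      show "length (T!i) = length (T'!i)" using t1.rowlen[OF i'] t2.rowlen[OF i'] by simp
      fix k assume k: "k < length (T!i)"
      show "T!i!k = T'!i!k"
      proof (cases "k = 0")
        case True thus ?thesis using ai by (simp add: t1.a_def t2.a_def)
      next
        case False
        then have k1: "k = 1" and il: "i < l" using k t1.rowlen[OF i'] by (auto split: if_splits)
        have "t1.b i = t2.b i" using c2 il by auto
        thus ?thesis using k1 by (simp add: t1.b_def t2.b_def)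
      qed
    qed
  qed
qed



lemma div2_iff: "(l::nat) \<le> m div 2 \<longleftrightarrow> 2*l \<le> m" by presburger

lemma ptab_I: "T \<in> tabl m l \<Longrightarrow> 2*l \<le> m \<Longrightarrow> ptab m l T" by (simp add: ptab_def)

lemma rho_eq: assumes "T \<in> tabl m l" "2*l \<le> m" shows "rho m (l,j,T) = ptab.g m l T j"
proof -
  interpret ptab m l T using assms by (rule ptab_I)
  show ?thesis by (simp add: rho_def rho_g fun_eq_iff)
qed

definition lam :: "nat \<Rightarrow> (nat \<times> nat list list) set" where
  "lam m = {(l,T). l \<le> m div 2 \<and> T \<in> tabl m l}"

lemma tabl_sub: "tabl m l \<subseteq> {T. set T \<subseteq> {r. set r \<subseteq> {1..m} \<and> length r \<le> 2} \<and> length T \<le> m}"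
proof
  fix T assume T: "T \<in> tabl m l"
  have len: "length T = m - l" using T by (simp add: tabl_def)
  have "set r \<subseteq> {1..m} \<and> length r \<le> 2" if r: "r \<in> set T" for r
  proof -
    obtain i where i: "i < length T" "r = T!i" using r by (auto simp: in_set_conv_nth)
    have "set r \<subseteq> set (concat T)" using r by auto
    moreover have "length r \<le> 2" using T i by (auto simp: tabl_def)
    ultimately show ?thesis using T by (simp add: tabl_def)
  qed
  then show "T \<in> {T. set T \<subseteq> {r. set r \<subseteq> {1..m} \<and> length r \<le> 2} \<and> length T \<le> m}"
    using len by auto
qed

lemma finite_tabl: "finite (tabl m l)"
proof -
  have f1: "finite {r. set r \<subseteq> {1..m} \<and> length r \<le> (2::nat)}" by (rule finite_lists_length_le) simp
  have f2: "finite {T. set T \<subseteq> {r. set r \<subseteq> {1..m} \<and> length r \<le> 2} \<and> length T \<le> m}"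
    by (rule finite_lists_length_le[OF f1])
  show ?thesis by (rule finite_subset[OF tabl_sub f2])
qed

lemma finite_lam: "finite (lam m)"
proof -
  have "lam m \<subseteq> (SIGMA l:{..m div 2}. tabl m l)" by (auto simp: lam_def)
  moreover have "finite (SIGMA l:{..m div 2}. tabl m l)" by (simp add: finite_tabl)
  ultimately show ?thesis by (rule finite_subset)
qed

lemma finite_idx: "finite (idx m)"
proof -
  have "idx m \<subseteq> (\<lambda>(x,j). (fst x, j, snd x)) ` (lam m \<times> {..m})"
  proof (rule subsetI)
    fix x assume "x \<in> idx m"
    then obtain l j T where x: "x = (l,j,T)" "l \<le> m div 2" "j \<le> m - 2*l" "T \<in> tabl m l"
      by (auto simp: idx_def)
    then show "x \<in> (\<lambda>(x,j). (fst x, j, snd x)) ` (lam m \<times> {..m})"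
      by (intro image_eqI[where x="((l,T),j)"]) (auto simp: lam_def)
  qed
  moreover have "finite ((\<lambda>(x,j). (fst x, j, snd x)) ` (lam m \<times> {..m}))"
    by (simp add: finite_lam)
  ultimately show ?thesis by (rule finite_subset)
qed

lemma idx_sum: "sum f (idx m) = (\<Sum>x\<in>lam m. \<Sum>j\<in>{..m - 2*fst x}. f (fst x, j, snd x))"
proof -
  have "sum f (idx m) = sum (\<lambda>(x,j). f (fst x, j, snd x)) (Sigma (lam m) (\<lambda>x. {..m - 2*fst x}))"
    by (rule sum.reindex_bij_witness[where i="\<lambda>(x,j). (fst x, j, snd x)" and j="\<lambda>(l,j,T). ((l,T),j)"])
       (auto simp: idx_def lam_def)
  also have "\<dots> = (\<Sum>x\<in>lam m. \<Sum>j\<in>{..m - 2*fst x}. f (fst x, j, snd x))"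
    by (rule sum.Sigma[symmetric]) (auto simp: finite_lam)
  finally show ?thesis .
qed

lemma lam_ptab: "x \<in> lam m \<Longrightarrow> ptab m (fst x) (snd x)"
  by (auto simp: lam_def ptab_def div2_iff)

lemma specht_indep:
  assumes h: "\<And>S. (\<Sum>x\<in>lam m. d x * ptab.g m (fst x) (snd x) 0 S) = 0"
  shows "\<forall>x\<in>lam m. d x = 0"
proof (rule ccontr)
  assume nall: "\<not> (\<forall>x\<in>lam m. d x = 0)"
  define M where "M = {x \<in> lam m. d x \<noteq> 0}"
  have finM: "finite M" using finite_lam by (simp add: M_def)
  have neM: "M \<noteq> {}" using nall by (auto simp: M_def)
  define \<sigma> where "\<sigma> x = (\<Sum>y\<in>ptab.B (fst x) (snd x). y)" for x
  define s0 where "s0 = Max (\<sigma> ` M)"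
  have "s0 \<in> \<sigma> ` M" using finM neM by (simp add: s0_def)
  then obtain x0 where x0: "x0 \<in> M" "\<sigma> x0 = s0" by auto
  have smax: "\<sigma> x \<le> \<sigma> x0" if "x \<in> M" for x using finM that x0 by (simp add: s0_def)
  have x0l: "x0 \<in> lam m" using x0 by (simp add: M_def)
  obtain l0 T0 where lT0: "x0 = (l0, T0)" by (cases x0)
  have p0: "ptab m l0 T0" using lam_ptab[OF x0l] lT0 by simp
  interpret t0: ptab m l0 T0 by (rule p0)
  define B0 where "B0 = t0.B"
  have others: "d x * ptab.g m (fst x) (snd x) 0 B0 = 0" if x: "x \<in> lam m" "x \<noteq> x0" for x
  proof (rule ccontr)
    assume nz: "d x * ptab.g m (fst x) (snd x) 0 B0 \<noteq> 0"
    obtain l T where lT: "x = (l,T)" by (cases x)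
    have p: "ptab m l T" using lam_ptab[OF x(1)] lT by simp
    interpret t: ptab m l T by (rule p)
    have "x \<in> M" using nz x by (auto simp: M_def)
    hence le1: "\<sigma> x \<le> \<sigma> x0" by (rule smax)
    have gnz: "t.g 0 B0 \<noteq> 0" using nz lT by simp
    from t.g0_le[OF gnz] have le2: "(\<Sum>y\<in>B0. y) \<le> (\<Sum>y\<in>t.B. y)"
      and eqc: "(\<Sum>y\<in>B0. y) = (\<Sum>y\<in>t.B. y) \<longrightarrow> B0 = t.B" by auto
    have e0: "(\<Sum>y\<in>B0. y) = \<sigma> x0" by (simp add: \<sigma>_def B0_def lT0)
    have e1: "\<sigma> x = (\<Sum>y\<in>t.B. y)" by (simp add: \<sigma>_def lT)
    have BB: "B0 = t.B" using eqc le1 le2 e0 e1 by simp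
    then have ll: "l0 = l" using t0.cardB t.cardB by (simp add: B0_def)
    have "(\<lambda>i. T0!i!1) ` {..<l0} = (\<lambda>i. T!i!1) ` {..<l}"
      using BB by (simp add: B0_def t0.B_def t.B_def t0.b_def t.b_def)
    then have "T0 = T" using ptab_det[OF p0] p ll by simp
    then have "x = x0" using lT lT0 ll by simp
    then show False using x by simp
  qed
  have "(\<Sum>x\<in>lam m. d x * ptab.g m (fst x) (snd x) 0 B0)
      = d x0 * ptab.g m (fst x0) (snd x0) 0 B0 + (\<Sum>x\<in>lam m - {x0}. d x * ptab.g m (fst x) (snd x) 0 B0)"
    by (rule sum.remove[OF finite_lam x0l])
  also have "(\<Sum>x\<in>lam m - {x0}. d x * ptab.g m (fst x) (snd x) 0 B0) = 0"
    by (rule sum.neutral) (use others in auto)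
  also have "ptab.g m (fst x0) (snd x0) 0 B0 = (-1)^l0" using t0.g0_B by (simp add: lT0 B0_def)
  finally have "d x0 = 0" using h[of B0] by simp
  thus False using x0 by (simp add: M_def)
qed


lemma idx_ptab: "(l,j,T) \<in> idx m \<Longrightarrow> ptab m l T \<and> j \<le> m - 2*l"
  by (auto simp: idx_def ptab_def div2_iff)

lemma indep_main: "lin_indep (idx m) (rho m)"
  unfolding lin_indep_def
proof (intro conjI allI impI ballI)
  show "finite (idx m)" by (rule finite_idx)
next
  fix c k assume lc: "lincomb c (idx m) (rho m) = (\<lambda>S. 0)" and k: "k \<in> idx m"
  define G where "G = (\<lambda>(l,j,T). ptab.g m l T j)"
  have rhoG: "rho m x = G x" if "x \<in> idx m" for x
  proof -
    obtain l j T where x: "x = (l,j,T)" by (cases x)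
    have "T \<in> tabl m l" "2*l \<le> m" using that x by (auto simp: idx_def div2_iff)
    thus ?thesis using x rho_eq by (simp add: G_def)
  qed
  have H: "(\<lambda>S. \<Sum>x\<in>idx m. c x * G x S) = (\<lambda>S. 0)"
  proof -
    have "lincomb c (idx m) (rho m) = (\<lambda>S. \<Sum>x\<in>idx m. c x * G x S)"
      unfolding lincomb_def by (rule ext, rule sum.cong) (simp_all add: rhoG)
    thus ?thesis using lc by simp
  qed
  have main: "\<forall>l T. (l,j,T) \<in> idx m \<longrightarrow> c (l,j,T) = 0" for j
  proof (induct "m - j" arbitrary: j rule: less_induct)
    case less
    have IH: "c (l,j',T) = 0" if "(l,j',T) \<in> idx m" "j < j'" for l j' T
    proof -
      have "j' \<le> m" using that(1) by (auto simp: idx_def)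
      hence "m - j' < m - j" using that(2) by simp
      thus ?thesis using less that(1) by blast
    qed
    define K where "K l = (\<Prod>t<j. (of_nat (m - 2*l + 1 - (j - t)) :: complex))" for l
    have hterm: "c x * (Fop m ^^ j) (G x) S = (if fst (snd x) = j then c x * K (fst x) * ptab.g m (fst x) (snd (snd x)) 0 S else 0)"
      if x: "x \<in> idx m" for x S
    proof -
      obtain l j' T where xx: "x = (l,j',T)" by (cases x)
      have p: "ptab m l T" and jl: "j' \<le> m - 2*l" using idx_ptab x xx by auto
      interpret t: ptab m l T by (rule p)
      have GG: "G (l,j',T) = t.g j'" by (simp add: G_def)
      consider "j < j'" | "j' < j" | "j' = j" by linarith
      then show ?thesis
      proof cases
        case 1 then show ?thesis using IH[of l j' T] x xx by simp
      next
        case 2 then show ?thesis using t.Fpow_g_zero[OF 2] by (simp add: GG xx)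
      next
        case 3
        then have GG': "G (l,j,T) = t.g j" using GG by simp
        show ?thesis using t.Fpow_g[of j j] 3 by (simp add: GG' xx K_def t.cardU mult.assoc)
      qed
    qed
    define d where "d x = (if j \<le> m - 2*fst x then c (fst x, j, snd x) * K (fst x) else 0)" for x
    have hd: "(\<Sum>x\<in>lam m. d x * ptab.g m (fst x) (snd x) 0 S) = 0" for S
    proof -
      have "0 = (\<Sum>x\<in>idx m. c x * (Fop m ^^ j) (G x) S)"
        using fun_cong[OF arg_cong[OF H, of "Fop m ^^ j"], of S] by (simp add: Fpow_lincomb Fpow_zero)
      also have "\<dots> = (\<Sum>x\<in>idx m. if fst (snd x) = j then c x * K (fst x) * ptab.g m (fst x) (snd (snd x)) 0 S else 0)"
        by (rule sum.cong) (simp_all add: hterm)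
      also have "\<dots> = (\<Sum>x\<in>lam m. \<Sum>j'\<in>{..m - 2*fst x}. if j' = j then c (fst x, j', snd x) * K (fst x) * ptab.g m (fst x) (snd x) 0 S else 0)"
        by (simp add: idx_sum) (simp only: fst_conv snd_conv)
      also have "\<dots> = (\<Sum>x\<in>lam m. d x * ptab.g m (fst x) (snd x) 0 S)"
        by (rule sum.cong) (auto simp: d_def)
      finally show ?thesis by simp
    qed
    have dz: "\<forall>x\<in>lam m. d x = 0" by (rule specht_indep[OF hd])
    show ?case
    proof (intro allI impI)
      fix l T assume lj: "(l,j,T) \<in> idx m"
      have p: "ptab m l T" and jl: "j \<le> m - 2*l" using idx_ptab[OF lj] by auto
      interpret t: ptab m l T by (rule p)
      have "(l,T) \<in> lam m" using lj by (auto simp: idx_def lam_def)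
      hence "c (l,j,T) * K l = 0" using dz jl by (auto simp: d_def)
      moreover have "K l \<noteq> 0" using t.Fpow_g_nz[of j] jl by (simp add: K_def t.cardU)
      ultimately show "c (l,j,T) = 0" by simp
    qed
  qed
  obtain l j T where "k = (l,j,T)" by (cases k)
  thus "c k = 0" using main k by blast
qed

lemma tabl_snoc:
  assumes T: "T \<in> tabl m l" and l2: "2*l \<le> m"
  shows "T @ [[Suc m]] \<in> tabl (Suc m) l"
proof -
  interpret ptab m l T using T l2 by (rule ptab_I)
  let ?T = "T @ [[Suc m]]"
  have len: "length ?T = Suc m - l" using lenT l2 by simp
  have rows: "\<forall>i<length ?T. length (?T!i) = (if i < l then 2 else 1)"
  proof (intro allI impI)
    fix i assume i: "i < length ?T"
    show "length (?T!i) = (if i < l then 2 else 1)"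
    proof (cases "i < m - l")
      case True thus ?thesis using rowlen lenT by (simp add: nth_append)
    next
      case False
      hence "i = m - l" using i lenT by simp
      thus ?thesis using lenT l2 by (simp add: nth_append)
    qed
  qed
  have nm: "Suc m \<notin> set (concat T)" by (simp only: setT) simp
  have dist: "distinct (concat ?T)" using distT nm by simp
  have st: "set (concat ?T) = {1..Suc m}"
  proof -
    have "set (concat ?T) = set (concat T) \<union> {Suc m}" by simp
    also have "\<dots> = {1..m} \<union> {Suc m}" by (simp only: setT)
    also have "\<dots> = {1..Suc m}" by auto
    finally show ?thesis .
  qed
  have inc: "\<forall>i<l. ?T!i!0 < ?T!i!1" using ab_lt lm lenT by (auto simp: nth_append a_def b_def)
  have colc: "\<forall>i k. Suc i < length ?T \<and> k < length (?T!(Suc i)) \<longrightarrow> ?T!i!k < ?T!(Suc i)!k"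
  proof (intro allI impI, elim conjE)
    fix i k assume i: "Suc i < length ?T" and k: "k < length (?T!(Suc i))"
    show "?T!i!k < ?T!(Suc i)!k"
    proof (cases "Suc i < m - l")
      case True thus ?thesis using col[OF True] k lenT by (simp add: nth_append)
    next
      case False
      hence si: "Suc i = m - l" using i lenT l2 by simp
      hence k0: "k = 0" using k lenT by (simp add: nth_append)
      have "a i \<in> {1..m}" using a_mem si by simp
      thus ?thesis using si k0 lenT by (simp add: nth_append a_def)
    qed
  qed
  show ?thesis unfolding tabl_def mem_Collect_eq by (intro conjI len rows dist st inc colc)
qed

lemma tabl_ext:
  assumes T: "T \<in> tabl m l" and lt: "2*l < m"
  shows "T[l := [T!l!0, Suc m]] \<in> tabl (Suc m) (Suc l)"
proof -
  interpret ptab m l T using T lt by (intro ptab_I) simp_all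
  let ?T = "T[l := [T!l!0, Suc m]]"
  define x where "x = T!l!0"
  have ll: "l < m - l" using lt by simp
  have rl: "length (T!l) = 1" using rowlen[OF ll] by simp
  have Tl: "T!l = [x]" using rl by (cases "T!l") (auto simp: x_def)
  have len: "length ?T = Suc m - Suc l" using lenT by simp
  have nthT: "?T!i = (if i = l then [x, Suc m] else T!i)" if "i < m - l" for i
    using that lenT by (simp add: nth_list_update x_def)
  have rows: "\<forall>i<length ?T. length (?T!i) = (if i < Suc l then 2 else 1)"
  proof (intro allI impI)
    fix i assume "i < length ?T" hence i: "i < m - l" using lenT by simp
    show "length (?T!i) = (if i < Suc l then 2 else 1)" using rowlen[OF i] nthT[OF i] by auto
  qed
  define A where "A = concat (take l T)"
  define C where "C = concat (drop (Suc l) T)"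
  have e: "T = take l T @ T!l # drop (Suc l) T" using id_take_nth_drop[of l T] ll lenT by simp
  have cT: "concat T = A @ x # C"
  proof -
    from e have "concat T = concat (take l T @ T!l # drop (Suc l) T)" by (rule arg_cong)
    thus ?thesis by (simp add: A_def C_def Tl)
  qed
  have cT': "concat ?T = A @ x # Suc m # C"
    using upd_conv_take_nth_drop[of l T "[x, Suc m]"] ll lenT by (simp add: A_def C_def x_def)
  from setT have s0: "set (A @ x # C) = {1..m}" by (simp only: cT)
  from distT have d0: "distinct (A @ x # C)" by (simp only: cT)
  have nm: "Suc m \<notin> set (A @ x # C)" using s0 by simp
  have dist: "distinct (concat ?T)" unfolding cT' using d0 nm by auto
  have st: "set (concat ?T) = {1..Suc m}"
  proof -
    have "set (concat ?T) = set (A @ x # C) \<union> {Suc m}" unfolding cT' by auto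
    also have "\<dots> = {1..Suc m}" unfolding s0 by auto
    finally show ?thesis .
  qed
  have xm: "x \<in> {1..m}" using a_mem[OF ll] by (simp add: a_def x_def)
  have inc: "\<forall>i<Suc l. ?T!i!0 < ?T!i!1"
  proof (intro allI impI)
    fix i assume i: "i < Suc l"
    hence i': "i < m - l" using ll by simp
    show "?T!i!0 < ?T!i!1"
    proof (cases "i = l")
      case True thus ?thesis using nthT[OF i'] xm by simp
    next
      case False hence "i < l" using i by simp
      thus ?thesis using nthT[OF i'] ab_lt False by (simp add: a_def b_def)
    qed
  qed
  have colc: "\<forall>i k. Suc i < length ?T \<and> k < length (?T!(Suc i)) \<longrightarrow> ?T!i!k < ?T!(Suc i)!k"
  proof (intro allI impI, elim conjE)
    fix i k assume i: "Suc i < length ?T" and k: "k < length (?T!(Suc i))"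
    have si: "Suc i < m - l" using i lenT by simp
    have i': "i < m - l" using si by simp
    show "?T!i!k < ?T!(Suc i)!k"
    proof (cases "Suc i = l")
      case True
      hence il: "i \<noteq> l" "i < l" by auto
      have Ti: "?T!i = T!i" using nthT[OF i'] il by simp
      have TS: "?T!(Suc i) = [x, Suc m]" using nthT[OF si] True by simp
      have k2: "k < 2" using k TS by simp
      show ?thesis
      proof (cases "k = 0")
        case True
        have "T!i!0 < T!(Suc i)!0" using col[OF si, of 0] rl \<open>Suc i = l\<close> by simp
        thus ?thesis using Ti TS True \<open>Suc i = l\<close> by (simp add: x_def)
      next
        case False hence k1: "k = 1" using k2 by simp
        have "b i \<in> {1..m}" using b_mem[OF il(2)] .
        thus ?thesis using Ti TS k1 by (simp add: b_def)
      qed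
    next
      case False
      show ?thesis
      proof (cases "i = l")
        case True
        have TS: "?T!(Suc i) = T!(Suc i)" using nthT[OF si] True by simp
        have r1: "length (T!(Suc i)) = 1" using rowlen[OF si] True by simp
        hence k0: "k = 0" using k TS by simp
        have ne: "T!(Suc l) \<noteq> []" using r1 True by auto
        have "T!l!0 < T!(Suc l)!0" using col[of l 0] si True ne by simp
        thus ?thesis using nthT[OF i'] TS True k0 by (simp add: x_def)
      next
        case False
        thus ?thesis using nthT[OF i'] nthT[OF si] \<open>Suc i \<noteq> l\<close> col[OF si] k by simp
      qed
    qed
  qed
  show ?thesis unfolding tabl_def mem_Collect_eq by (intro conjI len rows dist st inc colc)
qed


definition ext_map :: "nat \<Rightarrow> bool \<times> (nat \<times> nat \<times> nat list list) \<Rightarrow> nat \<times> nat \<times> nat list list" where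
  "ext_map m p = (case p of (bb, (l, j, T)) \<Rightarrow> if bb then (l, j, T @ [[Suc m]])
                 else if j = m - 2*l then (l, Suc j, T @ [[Suc m]])
                 else (Suc l, j, T[l := [T!l!0, Suc m]]))"

lemma snoc_ne_upd:
  assumes T1: "T1 \<in> tabl m (Suc l)" "2 * Suc l \<le> m" and T2: "T2 \<in> tabl m l" "2*l < m"
  shows "T1 @ [[Suc m]] \<noteq> T2[l := [T2!l!0, Suc m]]"
proof
  assume e: "T1 @ [[Suc m]] = T2[l := [T2!l!0, Suc m]]"
  interpret t1: ptab m "Suc l" T1 using T1 by (rule ptab_I)
  interpret t2: ptab m l T2 using T2 by (intro ptab_I) simp_all
  have l1: "l < length T1" using t1.lenT T1(2) by simp
  have l2: "l < length T2" using t2.lenT T2(2) by simp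
  have "(T1 @ [[Suc m]])!l!1 = T1!l!1" using l1 by (simp add: nth_append)
  moreover have "T2[l := [T2!l!0, Suc m]]!l!1 = Suc m" using l2 by simp
  moreover have "T1!l!1 \<in> {1..m}" using t1.b_mem[of l] by (simp add: t1.b_def)
  ultimately show False using e by simp
qed

lemma upd_inj:
  assumes T: "T \<in> tabl m l" and T': "T' \<in> tabl m l" and lt: "2*l < m"
    and e: "T[l := [T!l!0, Suc m]] = T'[l := [T'!l!0, Suc m]]"
  shows "T = T'"
proof -
  interpret t: ptab m l T using T lt by (intro ptab_I) simp_all
  interpret t': ptab m l T' using T' lt by (intro ptab_I) simp_all
  have ll: "l < length T" "l < length T'" using t.lenT t'.lenT lt by auto
  have "T[l := [T!l!0, Suc m]] ! l = T'[l := [T'!l!0, Suc m]] ! l" using e by simp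
  then have x: "T!l!0 = T'!l!0" using ll by simp
  have r1: "length (T!l) = 1" "length (T'!l) = 1" using t.rowlen[of l] t'.rowlen[of l] lt by auto
  have "T!l = [T!l!0]" using r1(1) by (cases "T!l") auto
  moreover have "T'!l = [T'!l!0]" using r1(2) by (cases "T'!l") auto
  ultimately have Tl: "T!l = T'!l" using x by simp
  have "T = (T[l := [T!l!0, Suc m]])[l := T!l]" by simp
  also have "\<dots> = (T'[l := [T'!l!0, Suc m]])[l := T'!l]" using e Tl by simp
  also have "\<dots> = T'" by simp
  finally show ?thesis .
qed

lemma idx_facts: "(l,j,T) \<in> idx m \<Longrightarrow> T \<in> tabl m l \<and> 2*l \<le> m \<and> j \<le> m - 2*l"
  by (auto simp: idx_def div2_iff)

lemma ext_image: "ext_map m ` (UNIV \<times> idx m) \<subseteq> idx (Suc m)"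
proof
  fix y assume "y \<in> ext_map m ` (UNIV \<times> idx m)"
  then obtain bb x where bx: "x \<in> idx m" "y = ext_map m (bb, x)" by auto
  obtain l j T where x: "x = (l,j,T)" by (cases x)
  have f: "T \<in> tabl m l" "2*l \<le> m" "j \<le> m - 2*l" using idx_facts bx(1) x by auto
  show "y \<in> idx (Suc m)"
  proof (cases bb)
    case True
    then show ?thesis using bx x f tabl_snoc[OF f(1) f(2)] by (auto simp: ext_map_def idx_def div2_iff)
  next
    case False
    show ?thesis
    proof (cases "j = m - 2*l")
      case True
      then show ?thesis using False bx x f tabl_snoc[OF f(1) f(2)] by (auto simp: ext_map_def idx_def div2_iff)
    next
      case jn: False
      have lt: "2*l < m" using jn f by auto
      show ?thesis using False jn bx x f tabl_ext[OF f(1) lt] lt by (auto simp: ext_map_def idx_def div2_iff)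
    qed
  qed
qed

lemma ext_inj: "inj_on (ext_map m) (UNIV \<times> idx m)"
proof (rule inj_onI)
  fix p p' assume p: "p \<in> UNIV \<times> idx m" and p': "p' \<in> UNIV \<times> idx m" and e: "ext_map m p = ext_map m p'"
  obtain bb l j T where pp: "p = (bb,(l,j,T))" by (cases p) auto
  obtain bb' l' j' T' where pp': "p' = (bb',(l',j',T'))" by (cases p') auto
  have f: "T \<in> tabl m l" "2*l \<le> m" "j \<le> m - 2*l" using idx_facts p pp by auto
  have f': "T' \<in> tabl m l'" "2*l' \<le> m" "j' \<le> m - 2*l'" using idx_facts p' pp' by auto
  have e': "(if bb then (l, j, T @ [[Suc m]])
                 else if j = m - 2*l then (l, Suc j, T @ [[Suc m]])
                 else (Suc l, j, T[l := [T!l!0, Suc m]])) =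
            (if bb' then (l', j', T' @ [[Suc m]])
                 else if j' = m - 2*l' then (l', Suc j', T' @ [[Suc m]])
                 else (Suc l', j', T'[l' := [T'!l'!0, Suc m]]))"
    using e by (simp add: ext_map_def pp pp')
  have nsu: False if "T @ [[Suc m]] = T'[l' := [T'!l'!0, Suc m]]" "l = Suc l'" "j' \<noteq> m - 2*l'"
  proof -
    have "2*l' < m" using that f' by auto
    then show False using snoc_ne_upd[of T m l' T'] that f f' by auto
  qed
  have nsu': False if "T' @ [[Suc m]] = T[l := [T!l!0, Suc m]]" "l' = Suc l" "j \<noteq> m - 2*l"
  proof -
    have "2*l < m" using that f by auto
    then show False using snoc_ne_upd[of T' m l T] that f f' by auto
  qed
  show "p = p'"
  proof (cases bb; cases bb')
    assume "bb" "bb'" then show ?thesis using e' pp pp' by simp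
  next
    assume b: "bb" "\<not> bb'"
    show ?thesis
    proof (cases "j' = m - 2*l'")
      case True then show ?thesis using e' b f by auto
    next
      case False then show ?thesis using e' b nsu by auto
    qed
  next
    assume b: "\<not> bb" "bb'"
    show ?thesis
    proof (cases "j = m - 2*l")
      case True then show ?thesis using e' b f' by auto
    next
      case False then show ?thesis using e' b nsu' by auto
    qed
  next
    assume b: "\<not> bb" "\<not> bb'"
    show ?thesis
    proof (cases "j = m - 2*l"; cases "j' = m - 2*l'")
      assume "j = m - 2*l" "j' = m - 2*l'" then show ?thesis using e' b pp pp' by auto
    next
      assume "j = m - 2*l" "j' \<noteq> m - 2*l'" then show ?thesis using e' b nsu by auto
    next
      assume "j \<noteq> m - 2*l" "j' = m - 2*l'" then show ?thesis using e' b nsu' by auto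
    next
      assume jj: "j \<noteq> m - 2*l" "j' \<noteq> m - 2*l'"
      then have eq: "l = l'" "j = j'" "T[l := [T!l!0, Suc m]] = T'[l := [T'!l!0, Suc m]]"
        using e' b by auto
      have "2*l < m" using jj f by auto
      then have "T = T'" using upd_inj[OF f(1)] f' eq by auto
      then show ?thesis using pp pp' eq b by simp
    qed
  qed
qed

lemma card_idx: "2^m \<le> card (idx m)"
proof (induct m)
  case 0
  have "(0,0,[]) \<in> idx 0" by (simp add: idx_def tabl_def)
  hence "card (idx 0) \<noteq> 0" using finite_idx[of 0] by auto
  thus ?case by simp
next
  case (Suc m)
  have "card ((UNIV::bool set) \<times> idx m) \<le> card (idx (Suc m))"
    by (rule card_inj_on_le[OF ext_inj ext_image finite_idx])
  moreover have "card ((UNIV::bool set) \<times> idx m) = 2 * card (idx m)" by (simp add: card_cartesian_product)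
  ultimately show ?case using Suc by simp
qed


lemma rho_in_Rm: "rho m ` idx m \<subseteq> Rm m"
proof
  fix v assume "v \<in> rho m ` idx m"
  then obtain l j T where k: "(l,j,T) \<in> idx m" "v = rho m (l,j,T)" by auto
  have f: "T \<in> tabl m l" "2*l \<le> m" using idx_facts[OF k(1)] by auto
  then have "v = ptab.g m l T j" using k rho_eq by simp
  moreover have "ptab.g m l T j \<in> Rm m" using ptab.g_Rm[OF ptab_I[OF f]] by (auto simp: Rm_def)
  ultimately show "v \<in> Rm m" by simp
qed

lemma cspan_Rm: "v ` I \<subseteq> Rm m \<Longrightarrow> cspan I v \<subseteq> Rm m"
proof
  fix f assume sub: "v ` I \<subseteq> Rm m" and "f \<in> cspan I v"
  then obtain c where f: "f = lincomb c I v" by (auto simp: cspan_def)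
  show "f \<in> Rm m"
    unfolding Rm_def mem_Collect_eq
  proof (intro allI impI)
    fix S assume "f S \<noteq> 0"
    then have "(\<Sum>k\<in>I. c k * v k S) \<noteq> 0" using f by (simp add: lincomb_def)
    then obtain k where "k \<in> I" "c k * v k S \<noteq> 0" by (rule sum.not_neutral_contains_not_neutral)
    then show "S \<subseteq> {1..m}" using sub by (auto simp: Rm_def)
  qed
qed

theorem mainTheorem7:
  fixes m :: nat
  assumes "m \<ge> 1"
  shows "is_basis_of (idx m) (rho m) (Rm m)
       \<and> (\<forall>l \<le> m div 2. is_basis_of (idx_l m l) (rho m) (Rl m l))"
proof
  have li: "lin_indep (idx m) (rho m)" by (rule indep_main)
  have span2: "Rm m \<subseteq> cspan (idx m) (rho m)" by (rule lin_indep_span[OF li rho_in_Rm card_idx])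
  have "cspan (idx m) (rho m) = Rm m" by (rule subset_antisym[OF cspan_Rm[OF rho_in_Rm] span2])
  then show "is_basis_of (idx m) (rho m) (Rm m)" unfolding is_basis_of_def
    using rho_in_Rm[of m] li by simp
next
  show "\<forall>l \<le> m div 2. is_basis_of (idx_l m l) (rho m) (Rl m l)"
  proof (intro allI impI)
    fix l assume l: "l \<le> m div 2"
    define I2 where "I2 = {(j, T). j \<le> m - 2*l \<and> T \<in> tabl m l}"
    define v2 where "v2 = (\<lambda>(j, T). rmul (rpow (omega m) j) (VT l T))"
    define h where "h = (\<lambda>(j::nat, T::nat list list). (l, j, T))"
    have Rl_eq: "Rl m l = cspan I2 v2" by (simp add: Rl_def I2_def v2_def)
    have finI2: "finite I2"
    proof -
      have "I2 \<subseteq> {..m} \<times> tabl m l" by (auto simp: I2_def)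
      then show ?thesis by (rule finite_subset) (simp add: finite_tabl)
    qed
    have img: "idx_l m l = h ` I2" by (auto simp: idx_l_def I2_def h_def image_iff)
    have hinj: "inj_on h I2" by (rule inj_onI) (auto simp: h_def)
    have rv: "rho m (h x) S = (1 / fact (fst x)) * v2 x S" for x S
      by (cases x) (simp add: rho_def v2_def h_def)
    have sub_idx: "idx_l m l \<subseteq> idx m" using l by (auto simp: idx_l_def idx_def)
    have finl: "finite (idx_l m l)" using finite_subset[OF sub_idx finite_idx] .
    have lc_eq: "lincomb c (idx_l m l) (rho m) = lincomb (\<lambda>x. c (h x) / fact (fst x)) I2 v2" for c
      unfolding lincomb_def img
      by (rule ext) (simp add: sum.reindex[OF hinj] rv)
    have part1: "rho m ` idx_l m l \<subseteq> Rl m l"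
    proof
      fix w assume "w \<in> rho m ` idx_l m l"
      then obtain x where x: "x \<in> I2" "w = rho m (h x)" unfolding img by auto
      define c where "c = (\<lambda>y. if y = x then 1 / fact (fst x) else (0::complex))"
      have "lincomb c I2 v2 = w"
      proof
        fix S
        have "lincomb c I2 v2 S = (\<Sum>y\<in>I2. if y = x then 1 / fact (fst x) * v2 x S else 0)"
          unfolding lincomb_def c_def by (rule sum.cong) auto
        also have "\<dots> = 1 / fact (fst x) * v2 x S" using x(1) finI2 by simp
        also have "\<dots> = w S" using x(2) rv by simp
        finally show "lincomb c I2 v2 S = w S" .
      qed
      then show "w \<in> Rl m l" unfolding Rl_eq cspan_def by auto
    qed
    have part2: "lin_indep (idx_l m l) (rho m)"
      unfolding lin_indep_def
    proof (intro conjI allI impI ballI)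
      show "finite (idx_l m l)" by (rule finl)
    next
      fix c k assume lc: "lincomb c (idx_l m l) (rho m) = (\<lambda>S. 0)" and k: "k \<in> idx_l m l"
      define c' where "c' = (\<lambda>y. if y \<in> idx_l m l then c y else 0)"
      have "lincomb c' (idx m) (rho m) = lincomb c (idx_l m l) (rho m)"
      proof
        fix S
        have "lincomb c' (idx m) (rho m) S = (\<Sum>y\<in>idx m. if y \<in> idx_l m l then c y * rho m y S else 0)"
          unfolding lincomb_def c'_def by (rule sum.cong) auto
        also have "\<dots> = (\<Sum>y\<in>idx m \<inter> idx_l m l. c y * rho m y S)"
          by (rule sum.inter_restrict[symmetric, OF finite_idx])
        also have "idx m \<inter> idx_l m l = idx_l m l" using sub_idx by auto
        finally show "lincomb c' (idx m) (rho m) S = lincomb c (idx_l m l) (rho m) S"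
          by (simp add: lincomb_def)
      qed
      then have z: "lincomb c' (idx m) (rho m) = (\<lambda>S. 0)" using lc by simp
      have "\<forall>y\<in>idx m. c' y = 0" using indep_main[of m] z unfolding lin_indep_def by blast
      moreover have "k \<in> idx m" using k sub_idx by auto
      ultimately have "c' k = 0" by blast
      then show "c k = 0" using k by (simp add: c'_def)
    qed
    have part3: "cspan (idx_l m l) (rho m) = Rl m l"
    proof
      show "cspan (idx_l m l) (rho m) \<subseteq> Rl m l"
        unfolding Rl_eq cspan_def using lc_eq by auto
    next
      show "Rl m l \<subseteq> cspan (idx_l m l) (rho m)"
      proof
        fix w assume "w \<in> Rl m l"
        then obtain c2 where w: "w = lincomb c2 I2 v2" unfolding Rl_eq cspan_def by auto
        define c where "c = (\<lambda>y::nat \<times> nat \<times> nat list list. c2 (fst (snd y), snd (snd y)) * fact (fst (snd y)))"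
        have "lincomb c (idx_l m l) (rho m) = lincomb (\<lambda>x. c (h x) / fact (fst x)) I2 v2" by (rule lc_eq)
        also have "(\<lambda>x. c (h x) / fact (fst x)) = c2"
          by (rule ext) (auto simp: c_def h_def split: prod.splits)
        finally have "w = lincomb c (idx_l m l) (rho m)" using w by simp
        then show "w \<in> cspan (idx_l m l) (rho m)" unfolding cspan_def by blast
      qed
    qed
    show "is_basis_of (idx_l m l) (rho m) (Rl m l)"
      unfolding is_basis_of_def using part1 part2 part3 by auto
  qed
qed


end
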